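(* For every positive integer $n$, $|M_e(\mathcal{D},n)-M_o(\mathcal{D},n)|\le 2$, and $M_e(\mathcal{D},n)=M_o(\mathcal{D},n)$ for infinitely many positive integers $n$.
   Context: $M_e(\mathcal{D},n)$ (resp. $M_o(\mathcal{D},n)$) is the number of partitions of $n$ into distinct parts with even (resp. odd) crank, where for a partition into distinct parts the crank is its largest part if $1$ is not a part, and is (number of parts) $-2$ if $1$ is a part. *)

theory Defs
  imports Main
begin

definition distinct_partitions :: "nat \<Rightarrow> nat set set" where
  "distinct_partitions n = {P. finite P \<and> 0 \<notin> P \<and> \<Sum>P = n}"

definition dcrank :: "nat set \<Rightarrow> int" where
  "dcrank P = (if 1 \<in> P then int (card P) - 2 else int (Max P))"

definition M_e :: "nat \<Rightarrow> nat" where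
  "M_e n = card {P \<in> distinct_partitions n. even (dcrank P)}"

definition M_o :: "nat \<Rightarrow> nat" where
  "M_o n = card {P \<in> distinct_partitions n. odd (dcrank P)}"

end

theory Submission
  imports Defs
begin

abbreviation Dist where "Dist \<equiv> distinct_partitions"

lemma Dist_iff: "P \<in> Dist n \<longleftrightarrow> finite P \<and> 0 \<notin> P \<and> \<Sum>P = n"
  by (simp add: distinct_partitions_def)

lemma Dist_le: "P \<in> Dist n \<Longrightarrow> x \<in> P \<Longrightarrow> x \<le> n"
  unfolding Dist_iff using member_le_sum[of x P "\<lambda>x. x"] by auto

lemma finite_Dist: "finite (Dist n)"
proof -
  have "Dist n \<subseteq> Pow {..n}" using Dist_le by blast
  thus ?thesis by (rule finite_subset) simp
qed

lemma Dist_ne: "P \<in> Dist n \<Longrightarrow> n \<ge> 1 \<Longrightarrow> P \<noteq> {}"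
  unfolding Dist_iff by auto

definition run :: "nat set \<Rightarrow> nat" where "run P = (LEAST j. Max P - j \<notin> P)"

lemma run_notin: "0 \<notin> P \<Longrightarrow> Max P - run P \<notin> P"
  unfolding run_def by (rule LeastI[of _ "Max P"]) simp

lemma run_in: "i < run P \<Longrightarrow> Max P - i \<in> P"
  unfolding run_def using not_less_Least by blast

lemma run_le: "0 \<notin> P \<Longrightarrow> run P \<le> Max P"
  unfolding run_def by (rule Least_le) simp

lemma run_pos: "finite P \<Longrightarrow> P \<noteq> {} \<Longrightarrow> 0 \<notin> P \<Longrightarrow> run P \<ge> 1"
proof (rule ccontr)
  assume a: "finite P" "P \<noteq> {}" "0 \<notin> P" "\<not> 1 \<le> run P"
  hence "run P = 0" by simp
  with run_notin[OF a(3)] have "Max P \<notin> P" by simp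
  with Max_in[OF a(1,2)] show False by simp
qed

lemma run_eqI: assumes "Max P - t \<notin> P" "\<And>i. i < t \<Longrightarrow> Max P - i \<in> P" shows "run P = t"
  unfolding run_def
proof (rule Least_equality)
  show "Max P - t \<notin> P" by fact
  fix y assume y: "Max P - y \<notin> P"
  show "t \<le> y"
  proof (rule ccontr)
    assume "\<not> t \<le> y"
    hence "y < t" by simp
    with assms(2) y show False by blast
  qed
qed

lemma run_geI: assumes "0 \<notin> P" "\<And>i. i < t \<Longrightarrow> Max P - i \<in> P" shows "t \<le> run P"
proof (rule ccontr)
  assume "\<not> t \<le> run P"
  hence "run P < t" by simp
  with assms(2) have "Max P - run P \<in> P" by blast
  with run_notin[OF assms(1)] show False by blast
qed

definition condA :: "nat set \<Rightarrow> bool" where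
  "condA P \<longleftrightarrow> Min P \<le> run P \<and> (Min P < run P \<or> Min P + run P \<le> Max P)"
definition condB :: "nat set \<Rightarrow> bool" where
  "condB P \<longleftrightarrow> run P < Min P \<and> (run P + 1 < Min P \<or> Min P + run P \<le> Max P)"
definition fA :: "nat set \<Rightarrow> nat set" where
  "fA P = insert (Max P + 1) (P - {Min P, Max P + 1 - Min P})"
definition fB :: "nat set \<Rightarrow> nat set" where
  "fB P = insert (run P) (insert (Max P - run P) (P - {Max P}))"

lemma basic:
  assumes "finite P" "P \<noteq> {}" "0 \<notin> P"
  shows "Min P \<in> P" "Max P \<in> P" "\<And>x. x \<in> P \<Longrightarrow> Min P \<le> x \<and> x \<le> Max P"
    "Min P \<ge> 1" "Min P + run P \<le> Max P + 1"
proof -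
  show "Min P \<in> P" "Max P \<in> P" using assms by auto
  show "\<And>x. x \<in> P \<Longrightarrow> Min P \<le> x \<and> x \<le> Max P" using assms by auto
  show "Min P \<ge> 1" using assms \<open>Min P \<in> P\<close> by (metis less_one not_less)
  have "run P \<ge> 1" using run_pos assms by auto
  hence "Max P - (run P - 1) \<in> P" by (intro run_in) auto
  hence "Min P \<le> Max P - (run P - 1)" using assms by auto
  moreover have "run P \<le> Max P" using run_le assms by auto
  ultimately show "Min P + run P \<le> Max P + 1" using \<open>run P \<ge> 1\<close> by linarith
qed

lemma fA_props:
  assumes P: "finite P" "P \<noteq> {}" "0 \<notin> P" and c: "condA P"
  shows "finite (fA P)" "0 \<notin> fA P" "fA P \<noteq> {}" "\<Sum>(fA P) = \<Sum>P" "card (fA P) = card P - 1" "card P \<ge> 2"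
    "Max (fA P) = Max P + 1" "run (fA P) = Min P" "condB (fA P)" "fB (fA P) = P"
proof -
  define s where "s = Min P"
  define m where "m = Max P"
  define r where "r = run P"
  define t where "t = m + 1 - s"
  note b = basic[OF P, folded s_def m_def r_def]
  have sr: "s \<le> r" "s < r \<or> s + r \<le> m" using c unfolding condA_def s_def m_def r_def by auto
  have st: "s < t" using b sr unfolding t_def by linarith
  have tP: "t \<in> P"
  proof -
    have "m - (s - 1) \<in> P" unfolding m_def by (rule run_in) (use b sr r_def in auto)
    moreover have "m - (s - 1) = t" unfolding t_def using b by linarith
    ultimately show ?thesis by simp
  qed
  have m1: "m + 1 \<notin> P" using b by fastforce
  have eq: "fA P = insert (m + 1) (P - {s, t})" unfolding fA_def s_def m_def t_def by simp
  show fin: "finite (fA P)" using P eq by simp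
  show "0 \<notin> fA P" using P eq by simp
  show "fA P \<noteq> {}" using eq by simp
  have "\<Sum>P = s + \<Sum>(P - {s})" using P b by (simp add: sum.remove)
  also have "\<Sum>(P - {s}) = t + \<Sum>(P - {s} - {t})" using P tP st by (subst sum.remove[of _ t]) auto
  finally have sP: "\<Sum>P = s + t + \<Sum>(P - {s,t})" by (simp add: Diff_insert2[symmetric] insert_commute)
  have "\<Sum>(fA P) = m + 1 + \<Sum>(P - {s,t})" using eq m1 P by simp
  thus "\<Sum>(fA P) = \<Sum>P" using sP b unfolding t_def by linarith
  have cP: "card (P - {s,t}) = card P - 2" using P b tP st by (simp add: card_Diff_subset)
  moreover have "card P \<ge> 2"
  proof -
    have "{s,t} \<subseteq> P" using b tP by auto
    hence "card {s,t} \<le> card P" using P by (intro card_mono) auto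
    thus ?thesis using st by simp
  qed
  ultimately show "card (fA P) = card P - 1" "card P \<ge> 2" using eq m1 P by auto
  have mx: "Max (fA P) = m + 1"
    using fin unfolding eq by (intro Max_eqI) (auto dest!: b(3))
  thus "Max (fA P) = Max P + 1" unfolding m_def .
  have rn: "run (fA P) = s"
  proof (rule run_eqI)
    have "m + 1 - s \<notin> fA P" unfolding eq t_def using b st by auto
    thus "Max (fA P) - s \<notin> fA P" by (simp add: mx)
    fix i assume i: "i < s"
    show "Max (fA P) - i \<in> fA P"
    proof (cases "i = 0")
      case True
      have "m + 1 \<in> fA P" unfolding eq by simp
      with True show ?thesis by (simp add: mx)
    next
      case False
      have "m - (i - 1) \<in> P" unfolding m_def by (rule run_in) (use i sr r_def in auto)
      moreover have "m - (i - 1) = m + 1 - i" using False b i by linarith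
      moreover have "m + 1 - i \<noteq> s" "m + 1 - i \<noteq> t" using i st b False unfolding t_def by linarith+
      ultimately have "m + 1 - i \<in> fA P" unfolding eq by auto
      thus ?thesis by (simp add: mx)
    qed
  qed
  thus "run (fA P) = Min P" unfolding s_def .
  have gt: "\<And>x. x \<in> fA P \<Longrightarrow> s < x" unfolding eq using b st by fastforce
  have mn: "Min (fA P) \<in> fA P" using fin eq by (intro Min_in) auto
  have smn: "s < Min (fA P)" using gt mn by blast
  show "condB (fA P)" unfolding condB_def rn mx
  proof (intro conjI smn)
    show "s + 1 < Min (fA P) \<or> Min (fA P) + s \<le> m + 1"
    proof (cases "Min (fA P) + s \<le> m + 1")
      case False
      hence "Min (fA P) > t" unfolding t_def using smn by arith
      thus ?thesis using st by linarith
    qed simp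
  qed
  have e1: "m + 1 - s = t" unfolding t_def ..
  have "fB (fA P) = insert s (insert t (fA P - {m + 1}))"
    unfolding fB_def rn mx e1 ..
  also have "fA P - {m + 1} = P - {s,t}" unfolding eq using m1 by blast
  also have "insert s (insert t (P - {s,t})) = P" using b(1) tP by blast
  finally show "fB (fA P) = P" .
qed

lemma fB_props:
  assumes P: "finite P" "P \<noteq> {}" "0 \<notin> P" and c: "condB P"
  shows "finite (fB P)" "0 \<notin> fB P" "fB P \<noteq> {}" "\<Sum>(fB P) = \<Sum>P" "card (fB P) = card P + 1"
    "Max (fB P) = Max P - 1" "Max P \<ge> 1" "condA (fB P)" "fA (fB P) = P"
proof -
  define s where "s = Min P"
  define m where "m = Max P"
  define r where "r = run P"
  define u where "u = m - r"
  note b = basic[OF P, folded s_def m_def r_def]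
  have rs: "r < s" "r + 1 < s \<or> s + r \<le> m" using c unfolding condB_def s_def m_def r_def by auto
  have r1: "r \<ge> 1" unfolding r_def using run_pos P by auto
  have uP: "u \<notin> P" unfolding u_def m_def r_def using run_notin P by auto
  have ur: "r < u" using rs b unfolding u_def by arith
  have um: "u + r = m" "u < m" using ur r1 b unfolding u_def by arith+
  have rP: "r \<notin> P" using rs b by fastforce
  have eq: "fB P = insert r (insert u (P - {m}))" unfolding fB_def u_def m_def r_def by simp
  show fin: "finite (fB P)" using P eq by simp
  show "0 \<notin> fB P" using P eq r1 ur by auto
  show "fB P \<noteq> {}" using eq by simp
  have "\<Sum>P = m + \<Sum>(P - {m})" by (rule sum.remove[OF P(1) b(2)])
  moreover have "\<Sum>(fB P) = r + (u + \<Sum>(P - {m}))" unfolding eq using P ur uP rP by simp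
  ultimately show "\<Sum>(fB P) = \<Sum>P" using um by linarith
  have "card (fB P) = card (P - {m}) + 2" unfolding eq using P ur uP rP by simp
  moreover have "card (P - {m}) + 1 = card P" using card_Suc_Diff1[OF P(1) b(2)] by simp
  ultimately show "card (fB P) = card P + 1" by simp
  show "Max P \<ge> 1" using b by (metis m_def le_trans)
  have mx: "Max (fB P) = m - 1"
  proof (rule Max_eqI[OF fin])
    fix y assume "y \<in> fB P"
    hence "y = r \<or> y = u \<or> (y \<in> P \<and> y \<noteq> m)" unfolding eq by auto
    moreover have "y \<in> P \<Longrightarrow> y \<le> m" using b(3) by blast
    ultimately show "y \<le> m - 1" using um ur by arith
  next
    show "m - 1 \<in> fB P"
    proof (cases "r = 1")
      case True thus ?thesis unfolding eq u_def by simp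
    next
      case False
      have "m - 1 \<in> P" unfolding m_def by (rule run_in) (use False r1 r_def in auto)
      thus ?thesis unfolding eq using um by auto
    qed
  qed
  thus "Max (fB P) = Max P - 1" unfolding m_def .
  have mn: "Min (fB P) = r"
  proof (rule Min_eqI[OF fin])
    fix y assume "y \<in> fB P"
    hence "y = r \<or> y = u \<or> y \<in> P" unfolding eq by auto
    moreover have "y \<in> P \<Longrightarrow> s \<le> y" using b(3) by blast
    ultimately show "r \<le> y" using ur rs by arith
  qed (simp add: eq)
  have rg: "r \<le> run (fB P)"
  proof (rule run_geI)
    show "0 \<notin> fB P" using P eq r1 ur by auto
    fix i assume i: "i < r"
    show "Max (fB P) - i \<in> fB P"
    proof (cases "i + 1 = r")
      case True
      hence "m - 1 - i = u" unfolding u_def by arith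
      moreover have "u \<in> fB P" unfolding eq by simp
      ultimately show ?thesis by (simp add: mx)
    next
      case False
      have "m - (i + 1) \<in> P" unfolding m_def by (rule run_in) (use False i r_def in auto)
      moreover have "m - (i + 1) \<noteq> m" using um by arith
      ultimately have "m - 1 - i \<in> fB P" unfolding eq by auto
      thus ?thesis by (simp add: mx)
    qed
  qed
  show "condA (fB P)" unfolding condA_def mn mx using rg um ur by arith
  have e1: "m - 1 + 1 = m" "m - 1 + 1 - r = u" using um unfolding u_def by arith+
  have "fA (fB P) = insert m (fB P - {r, u})" unfolding fA_def mn mx e1 by (simp add: u_def)
  also have "fB P - {r, u} = P - {m}" unfolding eq using uP rP ur by blast
  also have "insert m (P - {m}) = P" using b(2) by blast
  finally show "fA (fB P) = P" .
qed


lemma condAB_disj: "condB P \<Longrightarrow> \<not> condA P"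
  unfolding condA_def condB_def by auto

lemma Dist_props: "P \<in> Dist n \<Longrightarrow> n \<ge> 1 \<Longrightarrow> finite P \<and> P \<noteq> {} \<and> 0 \<notin> P"
  using Dist_ne unfolding Dist_iff by auto

lemma bij_fA: assumes "n \<ge> 1"
  shows "bij_betw fA {P \<in> Dist n. condA P} {P \<in> Dist n. condB P}"
proof (rule bij_betw_byWitness[where f'=fB])
  show "\<forall>a\<in>{P \<in> Dist n. condA P}. fB (fA a) = a"
  proof
    fix P assume "P \<in> {P \<in> Dist n. condA P}"
    hence P: "P \<in> Dist n" "condA P" by auto
    have p: "finite P" "P \<noteq> {}" "0 \<notin> P" using Dist_props[OF P(1) assms] by auto
    show "fB (fA P) = P" by (rule fA_props(10)[OF p P(2)])
  qed
  show "\<forall>a\<in>{P \<in> Dist n. condB P}. fA (fB a) = a"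
  proof
    fix P assume "P \<in> {P \<in> Dist n. condB P}"
    hence P: "P \<in> Dist n" "condB P" by auto
    have p: "finite P" "P \<noteq> {}" "0 \<notin> P" using Dist_props[OF P(1) assms] by auto
    show "fA (fB P) = P" by (rule fB_props(9)[OF p P(2)])
  qed
  show "fA ` {P \<in> Dist n. condA P} \<subseteq> {P \<in> Dist n. condB P}"
  proof
    fix Q assume "Q \<in> fA ` {P \<in> Dist n. condA P}"
    then obtain P where P: "P \<in> Dist n" "condA P" "Q = fA P" by blast
    have p: "finite P" "P \<noteq> {}" "0 \<notin> P" "\<Sum>P = n" using Dist_props[OF P(1) assms] P(1) unfolding Dist_iff by auto
    show "Q \<in> {P \<in> Dist n. condB P}" unfolding P(3) Dist_iff using fA_props[OF p(1-3) P(2)] p(4) by simp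
  qed
  show "fB ` {P \<in> Dist n. condB P} \<subseteq> {P \<in> Dist n. condA P}"
  proof
    fix Q assume "Q \<in> fB ` {P \<in> Dist n. condB P}"
    then obtain P where P: "P \<in> Dist n" "condB P" "Q = fB P" by blast
    have p: "finite P" "P \<noteq> {}" "0 \<notin> P" "\<Sum>P = n" using Dist_props[OF P(1) assms] P(1) unfolding Dist_iff by auto
    show "Q \<in> {P \<in> Dist n. condA P}" unfolding P(3) Dist_iff using fB_props[OF p(1-3) P(2)] p(4) by simp
  qed
qed

lemma sum_split: "finite S \<Longrightarrow> sum w S = sum w {x\<in>S. p x} + sum w {x\<in>S. \<not> p x}"
proof -
  assume "finite S"
  hence "sum w S = sum w (S \<inter> {x. p x}) + sum w (S - {x. p x})" by (rule sum.Int_Diff)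
  moreover have "S \<inter> {x. p x} = {x\<in>S. p x}" "S - {x. p x} = {x\<in>S. \<not> p x}" by auto
  ultimately show ?thesis by simp
qed

lemma cancel:
  fixes w :: "nat set \<Rightarrow> int"
  assumes n: "n \<ge> 1" and w: "\<And>P. P \<in> Dist n \<Longrightarrow> condA P \<Longrightarrow> w (fA P) = - w P"
  shows "sum w (Dist n) = sum w {P \<in> Dist n. \<not> condA P \<and> \<not> condB P}"
proof -
  have f: "finite (Dist n)" by (rule finite_Dist)
  have 1: "sum w (Dist n) = sum w {P \<in> Dist n. condA P} + sum w {P \<in> Dist n. \<not> condA P}"
    by (rule sum_split[OF f])
  have f2: "finite {P \<in> Dist n. \<not> condA P}" using f by simp
  have 2: "sum w {P \<in> Dist n. \<not> condA P} = sum w {P\<in>{P \<in> Dist n. \<not> condA P}. condB P}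
     + sum w {P\<in>{P \<in> Dist n. \<not> condA P}. \<not> condB P}"
    by (rule sum_split[OF f2])
  have 3: "{P\<in>{P \<in> Dist n. \<not> condA P}. condB P} = {P \<in> Dist n. condB P}" using condAB_disj by blast
  have 4: "{P\<in>{P \<in> Dist n. \<not> condA P}. \<not> condB P} = {P \<in> Dist n. \<not> condA P \<and> \<not> condB P}" by blast
  have "sum w {P \<in> Dist n. condB P} = sum (\<lambda>P. w (fA P)) {P \<in> Dist n. condA P}"
    using sum.reindex_bij_betw[OF bij_fA[OF n], of w] by simp
  also have "\<dots> = sum (\<lambda>P. - w P) {P \<in> Dist n. condA P}" using w by (intro sum.cong) auto
  also have "\<dots> = - sum w {P \<in> Dist n. condA P}" by (simp add: sum_negf)
  finally show ?thesis using 1 2 3 4 by simp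
qed

fun pa :: "nat \<Rightarrow> nat" where
  "pa 0 = 0"
| "pa (Suc k) = pa k + 3 * k + 1"

lemma sum_a: "\<Sum>{r..<2*r} = pa r"
proof (induction r)
  case 0 thus ?case by simp
next
  case (Suc r)
  have "\<Sum>{r..<Suc (Suc (2*r))} = \<Sum>{r..<2*r} + 2*r + (2*r+1)"
    by (simp only: sum.op_ivl_Suc) simp
  moreover have "\<Sum>{r..<Suc (Suc (2*r))} = r + \<Sum>{Suc r..<Suc (Suc (2*r))}" by (rule sum.atLeast_Suc_lessThan) simp
  moreover have "2 * Suc r = Suc (Suc (2*r))" by simp
  ultimately show ?case using Suc by simp
qed

lemma sum_b: "\<Sum>{Suc r..<Suc (2*r)} = pa r + r"
proof -
  have "\<Sum>{r..<Suc (2*r)} = \<Sum>{r..<2*r} + 2*r" by (simp only: sum.op_ivl_Suc) simp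
  moreover have "\<Sum>{r..<Suc (2*r)} = r + \<Sum>{Suc r..<Suc (2*r)}" by (rule sum.atLeast_Suc_lessThan) simp
  ultimately show ?thesis using sum_a by simp
qed

lemma fix_shape:
  assumes P: "finite P" "P \<noteq> {}" "0 \<notin> P" and c: "\<not> condA P" "\<not> condB P"
  shows "\<exists>r\<ge>1. P = {r..<2*r} \<or> P = {Suc r..<Suc (2*r)}"
proof -
  define s where "s = Min P"
  define m where "m = Max P"
  define r where "r = run P"
  note b = basic[OF P, folded s_def m_def r_def]
  have r1: "r \<ge> 1" unfolding r_def using run_pos P by auto
  have cs: "(s = r \<or> s = r + 1) \<and> m < s + r" using c unfolding condA_def condB_def s_def m_def r_def by auto
  have Pe: "P = {s..<m+1}"
  proof
    show "P \<subseteq> {s..<m+1}" using b(3) by fastforce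
    show "{s..<m+1} \<subseteq> P"
    proof
      fix x assume x: "x \<in> {s..<m+1}"
      have "m - x < r" using x cs by auto
      hence "m - (m - x) \<in> P" unfolding m_def r_def by (rule run_in)
      moreover have "m - (m - x) = x" using x by auto
      ultimately show "x \<in> P" by simp
    qed
  qed
  have m1: "m + 1 = s + r" using cs b(5) by linarith
  show ?thesis
  proof (cases "s = r")
    case True thus ?thesis using Pe m1 r1 by (intro exI[of _ r]) (auto simp: mult_2)
  next
    case False
    hence "s = r + 1" using cs by simp
    thus ?thesis using Pe m1 r1 by (intro exI[of _ r]) (auto simp: mult_2)
  qed
qed

lemma shape_a: assumes "r \<ge> 1" shows "\<not> condA {r..<2*r}" "\<not> condB {r..<2*r}"
  "card {r..<2*r} = r" "Max {r..<2*r} = 2*r - 1"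
proof -
  have mx: "Max {r..<2*r} = 2*r - 1" using assms by (intro Max_eqI) auto
  have mn: "Min {r..<2*r} = r" using assms by (intro Min_eqI) auto
  have rn: "run {r..<2*r} = r" by (rule run_eqI) (use assms mx in auto)
  show "\<not> condA {r..<2*r}" "\<not> condB {r..<2*r}" unfolding condA_def condB_def mx mn rn using assms by auto
  show "card {r..<2*r} = r" by simp
  show "Max {r..<2*r} = 2*r - 1" by (fact mx)
qed

lemma shape_b: assumes "r \<ge> 1" shows "\<not> condA {Suc r..<Suc (2*r)}" "\<not> condB {Suc r..<Suc (2*r)}"
  "card {Suc r..<Suc (2*r)} = r" "Max {Suc r..<Suc (2*r)} = 2*r"
proof -
  have mx: "Max {Suc r..<Suc (2*r)} = 2*r" using assms by (intro Max_eqI) auto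
  have mn: "Min {Suc r..<Suc (2*r)} = Suc r" using assms by (intro Min_eqI) auto
  have rn: "run {Suc r..<Suc (2*r)} = r" by (rule run_eqI) (use assms mx in auto)
  show "\<not> condA {Suc r..<Suc (2*r)}" "\<not> condB {Suc r..<Suc (2*r)}" unfolding condA_def condB_def mx mn rn using assms by auto
  show "card {Suc r..<Suc (2*r)} = r" by simp
  show "Max {Suc r..<Suc (2*r)} = 2*r" by (fact mx)
qed

lemma pa_mono: "k \<le> k' \<Longrightarrow> pa k \<le> pa k'"
  by (rule lift_Suc_mono_le[of pa]) auto

lemma pa_unique:
  assumes "pa k + j = pa k' + j'" "j \<le> 3*k" "j' \<le> 3*k'"
  shows "k = k' \<and> j = j'"
proof -
  have "\<not> k < k'"
  proof
    assume "k < k'"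
    hence "pa (Suc k) \<le> pa k'" by (intro pa_mono) simp
    thus False using assms by simp
  qed
  moreover have "\<not> k' < k"
  proof
    assume "k' < k"
    hence "pa (Suc k') \<le> pa k" by (intro pa_mono) simp
    thus False using assms by simp
  qed
  ultimately have "k = k'" by simp
  thus ?thesis using assms by simp
qed

lemma pa_exists: "\<exists>k j. j \<le> 3*k \<and> n = pa k + j"
proof (induction n)
  case 0 show ?case by (intro exI[of _ 0]) simp
next
  case (Suc n)
  then obtain k j where kj: "j \<le> 3*k" "n = pa k + j" by blast
  show ?case
  proof (cases "j < 3*k")
    case True thus ?thesis using kj by (intro exI[of _ k] exI[of _ "Suc j"]) simp
  next
    case False thus ?thesis using kj by (intro exI[of _ "Suc k"] exI[of _ 0]) simp
  qed
qed

lemma pa_pos: "k \<ge> 1 \<Longrightarrow> pa k \<ge> 1"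
  using pa_mono[of 1 k] by simp

lemma Fx_eq:
  assumes k: "k \<ge> 1" and j: "j \<le> 3*k"
  shows "{P \<in> Dist (pa k + j). \<not> condA P \<and> \<not> condB P} =
    (if j = 0 then {{k..<2*k}} else if j = k then {{Suc k..<Suc (2*k)}} else {})"
    (is "?L = ?R")
proof
  show "?L \<subseteq> ?R"
  proof
    fix P assume "P \<in> ?L"
    hence P: "P \<in> Dist (pa k + j)" "\<not> condA P" "\<not> condB P" by auto
    have p: "finite P" "P \<noteq> {}" "0 \<notin> P" using Dist_props[OF P(1)] pa_pos[OF k] by auto
    have sP: "\<Sum>P = pa k + j" using P(1) unfolding Dist_iff by simp
    obtain r where r: "r \<ge> 1" "P = {r..<2*r} \<or> P = {Suc r..<Suc (2*r)}"
      using fix_shape[OF p P(2,3)] by blast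
    show "P \<in> ?R"
    proof (cases "P = {r..<2*r}")
      case True
      hence "pa r + 0 = pa k + j" using sP sum_a by simp
      hence "r = k \<and> 0 = j" using j by (intro pa_unique) auto
      thus ?thesis using True by simp
    next
      case False
      hence Pe: "P = {Suc r..<Suc (2*r)}" using r by simp
      hence "pa r + r = pa k + j" using sP sum_b by simp
      hence "r = k \<and> r = j" using j by (intro pa_unique) auto
      thus ?thesis using Pe k by simp
    qed
  qed
  show "?R \<subseteq> ?L"
  proof (cases "j = 0")
    case True
    have "{k..<2*k} \<in> Dist (pa k + j)" unfolding Dist_iff using True k sum_a by auto
    thus ?thesis using True shape_a[OF k] by simp
  next
    case False
    have "{Suc k..<Suc (2*k)} \<in> Dist (pa k + k)" unfolding Dist_iff using sum_b by auto
    thus ?thesis using False shape_b[OF k] by auto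
  qed
qed

definition E :: "nat \<Rightarrow> int" where "E n = (\<Sum>P\<in>Dist n. (-1)^card P)"
definition F :: "nat \<Rightarrow> int" where "F n = (\<Sum>P\<in>Dist n. (-1)^Max P)"
definition E2 :: "nat \<Rightarrow> int" where "E2 n = (\<Sum>P\<in>{P\<in>Dist n. 1 \<notin> P}. (-1)^card P)"
definition A :: "nat \<Rightarrow> int" where "A n = (\<Sum>P\<in>{P\<in>Dist n. 1 \<notin> P}. (-1)^Max P)"

lemma E_fix: assumes n: "n \<ge> 1" shows "E n = (\<Sum>P\<in>{P \<in> Dist n. \<not> condA P \<and> \<not> condB P}. (-1)^card P)"
  unfolding E_def
proof (rule cancel[OF n])
  fix P assume P: "P \<in> Dist n" "condA P"
  have p: "finite P" "P \<noteq> {}" "0 \<notin> P" using Dist_props[OF P(1) n] by auto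
  have "card (fA P) = card P - 1" "card P \<ge> 2" using fA_props[OF p P(2)] by auto
  then obtain c where "card P = Suc c" "card (fA P) = c" by (intro that[of "card P - 1"]) auto
  thus "(-1::int) ^ card (fA P) = - ((-1) ^ card P)" by simp
qed

lemma F_fix: assumes n: "n \<ge> 1" shows "F n = (\<Sum>P\<in>{P \<in> Dist n. \<not> condA P \<and> \<not> condB P}. (-1)^Max P)"
  unfolding F_def
proof (rule cancel[OF n])
  fix P assume P: "P \<in> Dist n" "condA P"
  have p: "finite P" "P \<noteq> {}" "0 \<notin> P" using Dist_props[OF P(1) n] by auto
  have "Max (fA P) = Max P + 1" using fA_props[OF p P(2)] by auto
  thus "(-1::int) ^ Max (fA P) = - ((-1) ^ Max P)" by simp
qed

lemma E_val: assumes "k \<ge> 1" "j \<le> 3*k"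
  shows "E (pa k + j) = (if j = 0 \<or> j = k then (-1)^k else 0)"
  using assms pa_pos[OF assms(1)] shape_a(3)[OF assms(1)] shape_b(3)[OF assms(1)]
  by (simp add: E_fix Fx_eq)

lemma F_val: assumes "k \<ge> 1" "j \<le> 3*k"
  shows "F (pa k + j) = (if j = 0 then -1 else if j = k then 1 else 0)"
proof -
  have "odd (2*k - 1)" using assms(1) by presburger
  thus ?thesis
  using assms pa_pos[OF assms(1)] shape_a(4)[OF assms(1)] shape_b(4)[OF assms(1)]
  by (simp add: F_fix Fx_eq)
qed

lemma bij_ins1: assumes n: "n \<ge> 1"
  shows "bij_betw (insert 1) {Q \<in> Dist (n - 1). 1 \<notin> Q} {P \<in> Dist n. 1 \<in> P}"
proof (rule bij_betw_byWitness[where f'="\<lambda>P. P - {1}"])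
  show "\<forall>a\<in>{Q \<in> Dist (n - 1). 1 \<notin> Q}. insert 1 a - {1} = a" by auto
  show "\<forall>a\<in>{P \<in> Dist n. 1 \<in> P}. insert 1 (a - {1}) = a" by auto
  show "insert 1 ` {Q \<in> Dist (n - 1). 1 \<notin> Q} \<subseteq> {P \<in> Dist n. 1 \<in> P}"
  proof
    fix P assume "P \<in> insert 1 ` {Q \<in> Dist (n - 1). 1 \<notin> Q}"
    then obtain Q where Q: "Q \<in> Dist (n - 1)" "1 \<notin> Q" "P = insert 1 Q" by blast
    have q: "finite Q" "0 \<notin> Q" "\<Sum>Q = n - 1" using Q(1) unfolding Dist_iff by auto
    have "\<Sum>P = 1 + \<Sum>Q" using q Q(2,3) by simp
    thus "P \<in> {P \<in> Dist n. 1 \<in> P}" unfolding Dist_iff using q Q(3) n by auto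
  qed
  show "(\<lambda>P. P - {1}) ` {P \<in> Dist n. 1 \<in> P} \<subseteq> {Q \<in> Dist (n - 1). 1 \<notin> Q}"
  proof
    fix Q assume "Q \<in> (\<lambda>P. P - {1}) ` {P \<in> Dist n. 1 \<in> P}"
    then obtain P where P: "P \<in> Dist n" "1 \<in> P" "Q = P - {1}" by blast
    have p: "finite P" "0 \<notin> P" "\<Sum>P = n" using P(1) unfolding Dist_iff by auto
    have "\<Sum>P = 1 + \<Sum>(P - {1})" by (rule sum.remove[OF p(1) P(2)])
    thus "Q \<in> {Q \<in> Dist (n - 1). 1 \<notin> Q}" unfolding Dist_iff using p P(3) by auto
  qed
qed

lemma sum_with1: assumes n: "n \<ge> 1"
  shows "(\<Sum>P\<in>{P \<in> Dist n. 1 \<in> P}. w P) = (\<Sum>Q\<in>{Q \<in> Dist (n - 1). 1 \<notin> Q}. w (insert 1 Q))"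
  using sum.reindex_bij_betw[OF bij_ins1[OF n], of w] by simp

lemma card_part: assumes n: "n \<ge> 1"
  shows "(\<Sum>P\<in>{P \<in> Dist n. 1 \<in> P}. (-1::int)^card P) = - E2 (n - 1)"
proof -
  have "(\<Sum>P\<in>{P \<in> Dist n. 1 \<in> P}. (-1::int)^card P) = (\<Sum>Q\<in>{Q \<in> Dist (n - 1). 1 \<notin> Q}. (-1)^card (insert 1 Q))"
    by (rule sum_with1[OF n])
  also have "\<dots> = (\<Sum>Q\<in>{Q \<in> Dist (n - 1). 1 \<notin> Q}. - ((-1)^card Q))"
  proof (rule sum.cong)
    fix Q assume "Q \<in> {Q \<in> Dist (n - 1). 1 \<notin> Q}"
    hence "finite Q" "1 \<notin> Q" unfolding Dist_iff by auto
    thus "(-1::int)^card (insert 1 Q) = - ((-1)^card Q)" by simp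
  qed simp
  also have "\<dots> = - E2 (n - 1)" unfolding E2_def by (simp add: sum_negf)
  finally show ?thesis .
qed

lemma E_rec: assumes n: "n \<ge> 1" shows "E n = E2 n - E2 (n - 1)"
proof -
  have "E n = (\<Sum>P\<in>{P \<in> Dist n. 1 \<notin> P}. (-1::int)^card P) + (\<Sum>P\<in>{P \<in> Dist n. \<not> 1 \<notin> P}. (-1::int)^card P)"
    unfolding E_def by (rule sum_split[OF finite_Dist])
  thus ?thesis using card_part[OF n] unfolding E2_def by simp
qed

lemma F_rec: assumes n: "n \<ge> 2" shows "F n = A n + A (n - 1)"
proof -
  have n1: "n \<ge> 1" "n - 1 \<ge> 1" using n by auto
  have "F n = (\<Sum>P\<in>{P \<in> Dist n. 1 \<notin> P}. (-1::int)^Max P) + (\<Sum>P\<in>{P \<in> Dist n. \<not> 1 \<notin> P}. (-1::int)^Max P)"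
    unfolding F_def by (rule sum_split[OF finite_Dist])
  moreover have "(\<Sum>P\<in>{P \<in> Dist n. 1 \<in> P}. (-1::int)^Max P) = (\<Sum>Q\<in>{Q \<in> Dist (n - 1). 1 \<notin> Q}. (-1)^Max (insert 1 Q))"
    by (rule sum_with1[OF n1(1)])
  moreover have "\<dots> = (\<Sum>Q\<in>{Q \<in> Dist (n - 1). 1 \<notin> Q}. (-1)^Max Q)"
  proof (rule sum.cong)
    fix Q assume Q: "Q \<in> {Q \<in> Dist (n - 1). 1 \<notin> Q}"
    hence q: "finite Q" "Q \<noteq> {}" "0 \<notin> Q" using Dist_props n1 by auto
    have "Max Q \<in> Q" using q by simp
    hence "Max Q \<ge> 1" using q(3) by (cases "Max Q") auto
    hence "Max (insert 1 Q) = Max Q" using q by (simp add: Max_insert)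
    thus "(-1::int)^Max (insert 1 Q) = (-1)^Max Q" by simp
  qed simp
  ultimately show ?thesis unfolding A_def by simp
qed

lemma Dist0: "Dist 0 = {{}}"
proof -
  have "P \<in> Dist 0 \<Longrightarrow> P = {}" for P
  proof -
    assume P: "P \<in> Dist 0"
    have "x \<notin> P" for x using Dist_le[OF P, of x] P unfolding Dist_iff by auto
    thus ?thesis by blast
  qed
  moreover have "{} \<in> Dist 0" unfolding Dist_iff by simp
  ultimately show ?thesis by blast
qed

lemma E2_0: "E2 0 = 1"
proof -
  have e: "{P \<in> Dist 0. 1 \<notin> P} = {{}}" unfolding Dist0 by auto
  show ?thesis unfolding E2_def e by simp
qed

lemma A_1: "A 1 = 0"
proof -
  have e: "{P \<in> Dist 1. 1 \<notin> P} = {}"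
  proof (rule ccontr)
    assume "{P \<in> Dist 1. 1 \<notin> P} \<noteq> {}"
    then obtain P where P: "P \<in> Dist 1" "1 \<notin> P" by blast
    have "x \<notin> P" for x using Dist_le[OF P(1), of x] P unfolding Dist_iff by (cases x) auto
    hence "P = {}" by blast
    thus False using P(1) unfolding Dist_iff by simp
  qed
  show ?thesis unfolding A_def e by simp
qed

lemma closed:
  assumes "n \<ge> 1"
  shows "\<forall>k j. 1 \<le> k \<longrightarrow> j \<le> 3*k \<longrightarrow> n = pa k + j \<longrightarrow>
    E2 n = (if j < k then 0 else (-1)^k) \<and>
    A n = (-1)^j * (if j < k then (if even k then -2 else 0) else -1)"
  using assms
proof (induction n rule: nat_induct_at_least)
  case base
  show ?case
  proof (intro allI impI)
    fix k j assume kj: "1 \<le> k" "j \<le> 3*k" "1 = pa k + j"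
    have p1: "pa 1 = 1" by (simp add: One_nat_def)
    have h: "pa 1 + 0 = pa k + j" using kj(3)[symmetric] p1 by simp
    have kj': "1 = k \<and> 0 = j" by (rule pa_unique[OF h _ kj(2)]) simp
    have "E 1 = -1" using E_val[of 1 0] by simp
    hence e: "E2 1 = 0" using E_rec[of 1] E2_0 by simp
    have kk: "k = 1" "j = 0" using kj' by auto
    show "E2 1 = (if j < k then 0 else (-1)^k) \<and>
      A 1 = (-1)^j * (if j < k then (if even k then -2 else 0) else -1)" unfolding kk using e A_1 by simp
  qed
next
  case (Suc n)
  show ?case
  proof (intro allI impI)
    fix k j assume kj: "1 \<le> k" "j \<le> 3*k" "Suc n = pa k + j"
    have n2: "Suc n \<ge> 2" using Suc.hyps by simp
    have Erec: "E2 (Suc n) = E2 n + E (Suc n)" using E_rec[of "Suc n"] by simp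
    have Arec: "A (Suc n) = F (Suc n) - A n" using F_rec[OF n2] by simp
    show "E2 (Suc n) = (if j < k then 0 else (-1)^k) \<and>
      A (Suc n) = (-1)^j * (if j < k then (if even k then -2 else 0) else -1)"
    proof (cases j)
      case (Suc j')
      have nk: "n = pa k + j'" using kj Suc by simp
      have IH: "E2 n = (if j' < k then 0 else (-1)^k) \<and>
        A n = (-1)^j' * (if j' < k then (if even k then -2 else 0) else -1)"
        using Suc.IH kj nk Suc by simp
      have Ev: "E (Suc n) = (if j = k then (-1)^k else 0)" using E_val[OF kj(1,2)] kj(3) Suc by simp
      have Fv: "F (Suc n) = (if j = k then 1 else 0)" using F_val[OF kj(1,2)] kj(3) Suc by simp
      have par: "j = k \<Longrightarrow> even k = odd j'" using Suc by auto
      show ?thesis using IH Ev Fv Erec Arec Suc par by (auto simp: minus_one_power_iff) presburger+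
    next
      case 0
      have "k \<noteq> 1" using kj 0 Suc.hyps by auto
      then obtain k' where k': "k = Suc k'" "k' \<ge> 1" using kj(1) by (cases k) auto
      have nk: "n = pa k' + 3*k'" using kj 0 k' by simp
      have IH: "E2 n = (if 3*k' < k' then 0 else (-1)^k') \<and>
        A n = (-1)^(3*k') * (if 3*k' < k' then (if even k' then -2 else 0) else -1)"
        using Suc.IH k' nk by simp
      have Ev: "E (Suc n) = (-1)^k" using E_val[OF kj(1,2)] kj(3) 0 by simp
      have Fv: "F (Suc n) = -1" using F_val[OF kj(1,2)] kj(3) 0 by simp
      show ?thesis using IH Ev Fv Erec Arec 0 k' by (auto simp: minus_one_power_iff)
    qed
  qed
qed

lemma closed':
  assumes "1 \<le> k" "j \<le> 3*k"
  shows "E2 (pa k + j) = (if j < k then 0 else (-1)^k)"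
    "A (pa k + j) = (-1)^j * (if j < k then (if even k then -2 else 0) else -1)"
proof -
  have "pa k + j \<ge> 1" using pa_pos[OF assms(1)] by simp
  from closed[OF this] assms
  show "E2 (pa k + j) = (if j < k then 0 else (-1)^k)"
    "A (pa k + j) = (-1)^j * (if j < k then (if even k then -2 else 0) else -1)" by auto
qed

lemma D_eq: assumes n: "n \<ge> 1" shows "int (M_e n) - int (M_o n) = A n - E2 (n - 1)"
proof -
  define w where "w P = (if even (dcrank P) then 1 else (-1::int))" for P
  have "(\<Sum>P\<in>Dist n. w P) = (\<Sum>P\<in>{P\<in>Dist n. even (dcrank P)}. w P) + (\<Sum>P\<in>{P\<in>Dist n. \<not> even (dcrank P)}. w P)"
    by (rule sum_split[OF finite_Dist])
  also have "\<dots> = int (M_e n) - int (M_o n)" unfolding w_def M_e_def M_o_def by simp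
  finally have 1: "int (M_e n) - int (M_o n) = (\<Sum>P\<in>Dist n. w P)" by simp
  have 2: "(\<Sum>P\<in>Dist n. w P) = (\<Sum>P\<in>{P\<in>Dist n. 1 \<notin> P}. w P) + (\<Sum>P\<in>{P\<in>Dist n. \<not> 1 \<notin> P}. w P)"
    by (rule sum_split[OF finite_Dist])
  have 3: "(\<Sum>P\<in>{P\<in>Dist n. 1 \<notin> P}. w P) = A n" unfolding A_def
    by (rule sum.cong) (auto simp: w_def dcrank_def minus_one_power_iff)
  have "(\<Sum>P\<in>{P\<in>Dist n. 1 \<in> P}. w P) = (\<Sum>P\<in>{P\<in>Dist n. 1 \<in> P}. (-1::int)^card P)"
  proof (rule sum.cong)
    fix P assume "P \<in> {P\<in>Dist n. 1 \<in> P}"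
    hence "dcrank P = int (card P) - 2" unfolding dcrank_def by simp
    moreover have "even (int (card P) - 2) = even (card P)" by simp
    ultimately show "w P = (-1::int)^card P" unfolding w_def by (simp add: minus_one_power_iff)
  qed simp
  hence 4: "(\<Sum>P\<in>{P\<in>Dist n. 1 \<in> P}. w P) = - E2 (n - 1)" using card_part[OF n] by simp
  show ?thesis using 1 2 3 4 by simp
qed

theorem corollary1p8:
  shows "(\<forall>n::nat. n \<ge> 1 \<longrightarrow> \<bar>int (M_e n) - int (M_o n)\<bar> \<le> 2) \<and>
         infinite {n::nat. n \<ge> 1 \<and> M_e n = M_o n}"
proof
  show "\<forall>n::nat. n \<ge> 1 \<longrightarrow> \<bar>int (M_e n) - int (M_o n)\<bar> \<le> 2"
  proof (intro allI impI)
    fix n :: nat assume n: "n \<ge> 1"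
    obtain k j where kj: "j \<le> 3*k" "n = pa k + j" using pa_exists by blast
    have k: "k \<ge> 1" using kj n by (cases k) auto
    have D: "int (M_e n) - int (M_o n) = A n - E2 (n - 1)" by (rule D_eq[OF n])
    have An: "A n = (-1)^j * (if j < k then (if even k then -2 else 0) else -1)"
      using closed'(2)[OF k kj(1)] kj(2) by simp
    show "\<bar>int (M_e n) - int (M_o n)\<bar> \<le> 2"
    proof (cases j)
      case 0
      show ?thesis
      proof (cases "k = 1")
        case True
        hence "n = 1" using kj 0 by simp
        thus ?thesis using D A_1 E2_0 by simp
      next
        case False
        then obtain k' where k': "k = Suc k'" "k' \<ge> 1" using k by (cases k) auto
        have "n - 1 = pa k' + 3*k'" using kj 0 k' by simp
        hence "E2 (n - 1) = (-1)^k'" using closed'(1)[OF k'(2), of "3*k'"] by simp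
        thus ?thesis using D An 0 k' by (auto simp: minus_one_power_iff)
      qed
    next
      case (Suc j')
      have "n - 1 = pa k + j'" using kj Suc by simp
      hence "E2 (n - 1) = (if j' < k then 0 else (-1)^k)" using closed'(1)[OF k, of j'] kj Suc by simp
      thus ?thesis using D An Suc by (auto simp: minus_one_power_iff)
    qed
  qed
  show "infinite {n::nat. n \<ge> 1 \<and> M_e n = M_o n}"
  proof
    assume fin: "finite {n::nat. n \<ge> 1 \<and> M_e n = M_o n}"
    then obtain m where m: "\<forall>n\<in>{n::nat. n \<ge> 1 \<and> M_e n = M_o n}. n \<le> m"
      using finite_nat_set_iff_bounded_le by blast
    define k where "k = Suc m"
    define n where "n = pa k + Suc k"
    have k: "k \<ge> 1" "Suc k \<le> 3*k" unfolding k_def by auto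
    have n: "n \<ge> 1" unfolding n_def by simp
    have "A n = (-1)^(Suc k) * -1" using closed'(2)[OF k] unfolding n_def by simp
    moreover have "E2 (n - 1) = (-1)^k" using closed'(1)[OF k(1), of k] unfolding n_def by simp
    ultimately have "int (M_e n) - int (M_o n) = 0" using D_eq[OF n] by simp
    hence "n \<in> {n::nat. n \<ge> 1 \<and> M_e n = M_o n}" using n by simp
    hence "n \<le> m" using m by blast
    moreover have "n > m" unfolding n_def k_def by simp
    ultimately show False by simp
  qed
qed

end
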